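(* For every integer $k\ge 2$, let $T(k,2)$ be the complete $k$-ary tree of height 2 (a root $x$ with children $x_1,\dots,x_k$, each $x_i$ having exactly $k$ children $x_{i1},\dots,x_{ik}$, which are leaves). Then $\tau(T(k,2))=k$ and $\beta_p(T(k,2))=k+1$.
   Context: Two vertices $u,v$ are twins if $N(u)\setminus\{v\}=N(v)\setminus\{u\}$; the twin number $\tau(G)$ is the maximum cardinality of an equivalence class of the twin relation. For a partition $\Pi=\{S_1,\dots,S_m\}$ of $V(G)$, $r(u|\Pi)=(d(u,S_1),\dots,d(u,S_m))$ with $d(u,S)=\min_{w\in S}d(u,w)$; $\Pi$ is locating if $r(u|\Pi)\ne r(v|\Pi)$ for all distinct $u,v$; $\beta_p(G)$ is the minimum size of a locating partition. *)

theory Defs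
  imports Main "HOL-Library.Disjoint_Sets"
begin

text \<open>A (simple, undirected) graph is given by a vertex set V and an adjacency
  relation E; only edges between vertices of V matter.\<close>

definition nbhd :: "'a set \<Rightarrow> ('a \<Rightarrow> 'a \<Rightarrow> bool) \<Rightarrow> 'a \<Rightarrow> 'a set" where
  "nbhd V E u = {w \<in> V. E u w}"

definition twins :: "'a set \<Rightarrow> ('a \<Rightarrow> 'a \<Rightarrow> bool) \<Rightarrow> 'a \<Rightarrow> 'a \<Rightarrow> bool" where
  "twins V E u v \<longleftrightarrow> nbhd V E u - {v} = nbhd V E v - {u}"

definition twin_class :: "'a set \<Rightarrow> ('a \<Rightarrow> 'a \<Rightarrow> bool) \<Rightarrow> 'a \<Rightarrow> 'a set" where
  "twin_class V E u = {v \<in> V. twins V E u v}"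

definition twin_number :: "'a set \<Rightarrow> ('a \<Rightarrow> 'a \<Rightarrow> bool) \<Rightarrow> nat" where
  "twin_number V E = Max ((\<lambda>u. card (twin_class V E u)) ` V)"

definition gdist :: "'a set \<Rightarrow> ('a \<Rightarrow> 'a \<Rightarrow> bool) \<Rightarrow> 'a \<Rightarrow> 'a \<Rightarrow> nat" where
  "gdist V E u v = (LEAST n. \<exists>p. length p = Suc n \<and> hd p = u \<and> last p = v \<and>
       set p \<subseteq> V \<and> (\<forall>i<n. E (p ! i) (p ! Suc i)))"

definition setdist :: "'a set \<Rightarrow> ('a \<Rightarrow> 'a \<Rightarrow> bool) \<Rightarrow> 'a \<Rightarrow> 'a set \<Rightarrow> nat" where
  "setdist V E u S = Min ((\<lambda>w. gdist V E u w) ` S)"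

definition locating :: "'a set \<Rightarrow> ('a \<Rightarrow> 'a \<Rightarrow> bool) \<Rightarrow> 'a set set \<Rightarrow> bool" where
  "locating V E P \<longleftrightarrow> (\<forall>u\<in>V. \<forall>v\<in>V. u \<noteq> v \<longrightarrow> (\<exists>S\<in>P. setdist V E u S \<noteq> setdist V E v S))"

definition partition_dim :: "'a set \<Rightarrow> ('a \<Rightarrow> 'a \<Rightarrow> bool) \<Rightarrow> nat" where
  "partition_dim V E = (LEAST m. \<exists>P. partition_on V P \<and> locating V E P \<and> card P = m)"

text \<open>Complete k-ary tree of height 2: root [], children [i], grandchildren [i,j].\<close>
definition tree_V :: "nat \<Rightarrow> nat list set" where
  "tree_V k = {[]} \<union> {[i] | i. i < k} \<union> {[i, j] | i j. i < k \<and> j < k}"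

definition tree_E :: "nat list \<Rightarrow> nat list \<Rightarrow> bool" where
  "tree_E xs ys \<longleftrightarrow> (\<exists>i. ys = xs @ [i] \<or> xs = ys @ [i])"

end

theory Submission
  imports Defs
begin



lemma tv_simps[simp]:
  "[] \<in> tree_V k"
  "[a] \<in> tree_V k \<longleftrightarrow> a < k"
  "[a,b] \<in> tree_V k \<longleftrightarrow> a < k \<and> b < k"
  "(a#b#c#l) \<notin> tree_V k"
  by (auto simp: tree_V_def)

lemma tv_cases:
  assumes "u \<in> tree_V k"
  obtains "u = []" | a where "a < k" "u = [a]" | a b where "a < k" "b < k" "u = [a,b]"
  using assms by (auto simp: tree_V_def)

lemma tv_finite: "finite (tree_V k)"
proof -
  have "tree_V k = {[]} \<union> (\<lambda>i. [i]) ` {..<k} \<union> (\<lambda>(i,j). [i,j]) ` ({..<k} \<times> {..<k})"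
    by (auto simp: tree_V_def)
  then show ?thesis by simp
qed

lemma tE_simps[simp]:
  "tree_E [] [a] \<and> tree_E [a] [] \<and> tree_E [a] [a,b] \<and> tree_E [a,b] [a]"
  "tree_E [a] [c] \<longleftrightarrow> False"
  "tree_E [] [a,b] \<longleftrightarrow> False"
  "tree_E [a,b] [] \<longleftrightarrow> False"
  "tree_E [a] [c,d] \<longleftrightarrow> a = c"
  "tree_E [c,d] [a] \<longleftrightarrow> a = c"
  "tree_E [a,b] [c,d] \<longleftrightarrow> False"
  "tree_E [] [] \<longleftrightarrow> False"
  by (auto simp: tree_E_def)

fun chain :: "nat list list \<Rightarrow> bool" where
  "chain (x#y#zs) = (tree_E x y \<and> chain (y#zs))" | "chain _ = True"

lemma chain_nth: "chain p \<longleftrightarrow> (\<forall>i<length p - 1. tree_E (p!i) (p!Suc i))"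
  by (induction p rule: chain.induct) (auto simp: All_less_Suc2)

fun lcp :: "nat list \<Rightarrow> nat list \<Rightarrow> nat" where
  "lcp (x#xs) (y#ys) = (if x = y then Suc (lcp xs ys) else 0)" | "lcp _ _ = 0"

lemma lcp_le: "lcp u v \<le> length u" "lcp u v \<le> length v"
  by (induction u v rule: lcp.induct) auto

lemma lcp_self: "lcp u u = length u"
  by (induction u) auto

lemma lcp_snoc: "lcp u (x@[i]) = lcp u x \<or> (lcp u (x@[i]) = Suc (lcp u x) \<and> lcp u x = length x)"
proof (induction u arbitrary: x)
  case Nil then show ?case by simp
next
  case (Cons a u) then show ?case by (cases x) auto
qed

lemma lcp_eq: "lcp u v = length u \<Longrightarrow> length u = length v \<Longrightarrow> u = v"
  by (induction u v rule: lcp.induct) (auto split: if_splits)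

definition dist :: "nat list \<Rightarrow> nat list \<Rightarrow> nat" where
  "dist u v = length u + length v - 2 * lcp u v"

lemma dist_self[simp]: "dist u u = 0" by (simp add: dist_def lcp_self)

lemma dist_0: "dist u v = 0 \<longleftrightarrow> u = v"
proof
  assume "dist u v = 0"
  then have "length u + length v \<le> 2 * lcp u v" by (simp add: dist_def)
  with lcp_le[of u v] show "u = v" using lcp_eq[of u v] by simp
qed simp

lemma dist_snoc: "dist u (x@[i]) \<le> Suc (dist u x) \<and> dist u x \<le> Suc (dist u (x@[i]))"
  using lcp_snoc[of u x i] lcp_le[of u x] lcp_le[of u "x@[i]"] unfolding dist_def by auto

lemma dist_step: "tree_E x y \<Longrightarrow> dist u y \<le> Suc (dist u x)"
  unfolding tree_E_def using dist_snoc by blast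

lemma walk_lb:
  assumes "chain p" "i < length p"
  shows "dist (hd p) (p!i) \<le> i"
  using assms(2)
proof (induction i)
  case 0 then show ?case by (cases p) auto
next
  case (Suc i)
  then have "tree_E (p!i) (p!Suc i)" using assms(1) by (auto simp: chain_nth)
  then show ?case using Suc dist_step[of "p!i" "p!Suc i" "hd p"] by auto
qed

lemma walk_ex:
  assumes "u \<in> tree_V k" "v \<in> tree_V k"
  shows "\<exists>p. length p = Suc (dist u v) \<and> hd p = u \<and> last p = v \<and> set p \<subseteq> tree_V k \<and> chain p"
  using assms
proof (cases rule: tv_cases[OF assms(1)])
  case 1 then show ?thesis
  proof (cases rule: tv_cases[OF assms(2)])
    case 1 with \<open>u = []\<close> show ?thesis by (intro exI[of _ "[[]]"]) (simp add: dist_def)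
  next
    case (2 a) with \<open>u = []\<close> show ?thesis by (intro exI[of _ "[[],[a]]"]) (simp add: dist_def)
  next
    case (3 a b) with \<open>u = []\<close> show ?thesis by (intro exI[of _ "[[],[a],[a,b]]"]) (simp add: dist_def)
  qed
next
  case (2 c) then show ?thesis
  proof (cases rule: tv_cases[OF assms(2)])
    case 1 with 2 show ?thesis by (intro exI[of _ "[[c],[]]"]) (simp add: dist_def)
  next
    case (2 a) show ?thesis
    proof (cases "a = c")
      case True with 2 \<open>u=[c]\<close> show ?thesis by (intro exI[of _ "[[c]]"]) (simp add: dist_def)
    next
      case False with 2 \<open>u=[c]\<close> \<open>c<k\<close> show ?thesis by (intro exI[of _ "[[c],[],[a]]"]) (simp add: dist_def)
    qed
  next
    case (3 a b) show ?thesis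
    proof (cases "a = c")
      case True with 3 \<open>u=[c]\<close> show ?thesis by (intro exI[of _ "[[c],[c,b]]"]) (simp add: dist_def)
    next
      case False with 3 \<open>u=[c]\<close> \<open>c<k\<close> show ?thesis by (intro exI[of _ "[[c],[],[a],[a,b]]"]) (simp add: dist_def)
    qed
  qed
next
  case (3 c d) note cd = this
  then show ?thesis
  proof (cases rule: tv_cases[OF assms(2)])
    case 1 with 3 show ?thesis by (intro exI[of _ "[[c,d],[c],[]]"]) (simp add: dist_def)
  next
    case (2 a) show ?thesis
    proof (cases "a = c")
      case True with 2 3 show ?thesis by (intro exI[of _ "[[c,d],[c]]"]) (simp add: dist_def)
    next
      case False with 2 3 show ?thesis by (intro exI[of _ "[[c,d],[c],[],[a]]"]) (simp add: dist_def)
    qed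
  next
    case (3 a b) note ab = this
    show ?thesis
    proof (cases "a = c")
      case True show ?thesis
      proof (cases "b = d")
        case True with \<open>a=c\<close> ab cd show ?thesis by (intro exI[of _ "[[c,d]]"]) (simp add: dist_def)
      next
        case False with \<open>a=c\<close> ab cd show ?thesis by (intro exI[of _ "[[c,d],[c],[c,b]]"]) (simp add: dist_def)
      qed
    next
      case False with ab cd show ?thesis by (intro exI[of _ "[[c,d],[c],[],[a],[a,b]]"]) (simp add: dist_def)
    qed
  qed
qed

lemma gdist_eq:
  assumes "u \<in> tree_V k" "v \<in> tree_V k"
  shows "gdist (tree_V k) tree_E u v = dist u v"
  unfolding gdist_def
proof (rule Least_equality)
  obtain p where p: "length p = Suc (dist u v)" "hd p = u" "last p = v" "set p \<subseteq> tree_V k" "chain p"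
    using walk_ex[OF assms] by blast
  then show "\<exists>p. length p = Suc (dist u v) \<and> hd p = u \<and> last p = v \<and> set p \<subseteq> tree_V k \<and>
       (\<forall>i<dist u v. tree_E (p ! i) (p ! Suc i))"
    by (auto simp: chain_nth)
next
  fix n assume "\<exists>p. length p = Suc n \<and> hd p = u \<and> last p = v \<and> set p \<subseteq> tree_V k \<and>
       (\<forall>i<n. tree_E (p ! i) (p ! Suc i))"
  then obtain p where p: "length p = Suc n" "hd p = u" "last p = v" "\<forall>i<n. tree_E (p ! i) (p ! Suc i)"
    by blast
  then have "chain p" by (simp add: chain_nth)
  moreover have "last p = p ! n" using p(1) by (subst last_conv_nth) auto
  ultimately show "dist u v \<le> n" using walk_lb[of p n] p by simp
qed




abbreviation "V k \<equiv> tree_V k"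
abbreviation "sd k u S \<equiv> setdist (tree_V k) tree_E u S"

lemma sd_eq:
  assumes "u \<in> V k" "S \<subseteq> V k"
  shows "sd k u S = Min (dist u ` S)"
  unfolding setdist_def using assms gdist_eq[of u k] by (intro arg_cong[where f=Min] image_cong) auto

lemma sd_att:
  assumes "u \<in> V k" "S \<subseteq> V k" "S \<noteq> {}"
  shows "\<exists>w\<in>S. sd k u S = dist u w"
proof -
  have "finite S" using assms(2) tv_finite finite_subset by blast
  then have "Min (dist u ` S) \<in> dist u ` S" using assms(3) by (intro Min_in) auto
  then show ?thesis using sd_eq[OF assms(1,2)] by auto
qed

lemma sd_le:
  assumes "u \<in> V k" "S \<subseteq> V k" "w \<in> S"
  shows "sd k u S \<le> dist u w"
proof -
  have "finite S" using assms(2) tv_finite finite_subset by blast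
  then show ?thesis using sd_eq[OF assms(1,2)] assms(3) by (simp add: Min_le)
qed

lemma sd_0:
  assumes "u \<in> V k" "S \<subseteq> V k" "S \<noteq> {}"
  shows "sd k u S = 0 \<longleftrightarrow> u \<in> S"
  using sd_att[OF assms] sd_le[OF assms(1,2), of u] dist_0 by fastforce

lemma sd_01:
  assumes "u \<in> V k" "S \<subseteq> V k" "w \<in> S" "dist u w \<le> 1"
  shows "sd k u S = (if u \<in> S then 0 else 1)"
proof -
  have "S \<noteq> {}" using assms(3) by auto
  then show ?thesis using sd_0[OF assms(1,2)] sd_le[OF assms(1,2,3)] assms(3,4) by auto
qed

lemma sd_ge2:
  assumes "u \<in> V k" "S \<subseteq> V k" "S \<noteq> {}" "\<forall>w\<in>S. 2 \<le> dist u w"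
  shows "2 \<le> sd k u S"
  using sd_att[OF assms(1-3)] assms(4) by auto

lemma nb_root: "nbhd (V k) tree_E [] = (\<lambda>i. [i]) ` {..<k}"
  unfolding nbhd_def by (auto elim: tv_cases)
lemma nb_mid: "a < k \<Longrightarrow> nbhd (V k) tree_E [a] = insert [] ((\<lambda>j. [a,j]) ` {..<k})"
  unfolding nbhd_def by (auto elim!: tv_cases)
lemma nb_leaf: "a < k \<Longrightarrow> nbhd (V k) tree_E [a,b] = {[a]}"
  unfolding nbhd_def by (auto elim!: tv_cases)

lemma not_tw: "w \<in> nbhd W E u \<Longrightarrow> w \<noteq> v \<Longrightarrow> w \<notin> nbhd W E v \<Longrightarrow> w \<noteq> u \<Longrightarrow> \<not> twins W E u v"
  unfolding twins_def by blast

lemma not_tw2: "w \<in> nbhd W E v \<Longrightarrow> w \<noteq> u \<Longrightarrow> w \<notin> nbhd W E u \<Longrightarrow> w \<noteq> v \<Longrightarrow> \<not> twins W E u v"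
  unfolding twins_def by blast

lemma tc_nonleaf:
  assumes "k \<ge> 2" "u \<in> V k" "\<forall>a b. u \<noteq> [a,b]"
  shows "twin_class (V k) tree_E u = {u}"
proof -
  define o1 where "o1 (c::nat) = (if c = 0 then 1 else (0::nat))" for c
  have o1: "o1 c \<noteq> c" "o1 c < k" for c :: nat using assms(1) by (auto simp: o1_def)
  have "v = u" if "v \<in> V k" "twins (V k) tree_E u v" for v
  proof (rule ccontr)
    assume ne: "v \<noteq> u"
    show False
    proof (cases rule: tv_cases[OF assms(2)])
      case 1 then show False
      proof (cases rule: tv_cases[OF that(1)])
        case 1 with \<open>u=[]\<close> ne show ?thesis by simp
      next
        case (2 c)
        have "\<not> twins (V k) tree_E u v" using 2 \<open>u=[]\<close>
          by (intro not_tw[of "[o1 c]"]) (auto simp: nb_root nb_mid o1)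
        with that(2) show ?thesis by simp
      next
        case (3 c d)
        have "\<not> twins (V k) tree_E u v" using 3 \<open>u=[]\<close>
          by (intro not_tw[of "[o1 c]"]) (auto simp: nb_root nb_leaf o1)
        with that(2) show ?thesis by simp
      qed
    next
      case (2 a) then show False
      proof (cases rule: tv_cases[OF that(1)])
        case 1
        have "\<not> twins (V k) tree_E u v" using 1 2 assms(1)
          by (intro not_tw[of "[a,0]"]) (auto simp: nb_root nb_mid)
        with that(2) show ?thesis by simp
      next
        case (2 c)
        have "\<not> twins (V k) tree_E u v" using 2 \<open>u=[a]\<close> \<open>a<k\<close> ne assms(1)
          by (intro not_tw[of "[a,0]"]) (auto simp: nb_mid)
        with that(2) show ?thesis by simp
      next
        case (3 c d)
        have "\<not> twins (V k) tree_E u v" using 3 \<open>u=[a]\<close> \<open>a<k\<close>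
          by (intro not_tw[of "[]"]) (auto simp: nb_leaf nb_mid)
        with that(2) show ?thesis by simp
      qed
    next
      case (3 a b) with assms(3) show False by simp
    qed
  qed
  then show ?thesis using assms(2) unfolding twin_class_def twins_def by auto
qed

lemma tc_leaf:
  assumes "k \<ge> 2" "i < k" "j < k"
  shows "twin_class (V k) tree_E [i,j] = (\<lambda>d. [i,d]) ` {..<k}"
proof -
  define o1 where "o1 (c::nat) = (if c = 0 then 1 else (0::nat))" for c
  have o1: "o1 c \<noteq> c" "o1 c < k" for c :: nat using assms(1) by (auto simp: o1_def)
  have "v \<in> (\<lambda>d. [i,d]) ` {..<k}" if "v \<in> V k" "twins (V k) tree_E [i,j] v" for v
  proof (cases rule: tv_cases[OF that(1)])
    case 1
    have "\<not> twins (V k) tree_E [i,j] v" using 1 assms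
      by (intro not_tw2[of "[o1 i]"]) (auto simp: nb_root nb_leaf o1)
    with that(2) show ?thesis by simp
  next
    case (2 c)
    have "\<not> twins (V k) tree_E [i,j] v" using 2 assms
      by (intro not_tw2[of "[]"]) (auto simp: nb_mid nb_leaf)
    with that(2) show ?thesis by simp
  next
    case (3 c d) show ?thesis
    proof (cases "c = i")
      case True with 3 show ?thesis by auto
    next
      case False
      have "\<not> twins (V k) tree_E [i,j] v" using 3 assms False
        by (intro not_tw[of "[i]"]) (auto simp: nb_leaf)
      with that(2) show ?thesis by simp
    qed
  qed
  moreover have "twins (V k) tree_E [i,j] [i,d]" if "d < k" for d
    using assms that by (simp add: twins_def nb_leaf)
  ultimately show ?thesis unfolding twin_class_def using assms by auto
qed

lemma twin_num:
  assumes "k \<ge> 2" shows "twin_number (V k) tree_E = k"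
  unfolding twin_number_def
proof (rule Max_eqI)
  show "finite ((\<lambda>u. card (twin_class (V k) tree_E u)) ` V k)" using tv_finite by simp
next
  have ck: "card ((\<lambda>d. [i,d]) ` {..<k}) = k" for i :: nat
    by (subst card_image) (auto simp: inj_on_def)
  fix y assume "y \<in> (\<lambda>u. card (twin_class (V k) tree_E u)) ` V k"
  then obtain u where u: "u \<in> V k" "y = card (twin_class (V k) tree_E u)" by auto
  show "y \<le> k"
  proof (cases "\<exists>a b. u = [a,b]")
    case True
    then obtain a b where "u = [a,b]" by auto
    with u assms show ?thesis by (simp add: tc_leaf ck)
  next
    case False
    with u assms show ?thesis by (simp add: tc_nonleaf)
  qed
next
  have ck: "card ((\<lambda>d. [i,d]) ` {..<k}) = k" for i :: nat
    by (subst card_image) (auto simp: inj_on_def)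
  have "[0,0] \<in> V k" using assms by simp
  moreover have "card (twin_class (V k) tree_E [0,0]) = k" using assms by (simp add: tc_leaf ck)
  ultimately show "k \<in> (\<lambda>u. card (twin_class (V k) tree_E u)) ` V k" by (metis image_eqI)
qed




definition Sp :: "nat \<Rightarrow> nat \<Rightarrow> nat list set" where
  "Sp k j = insert [j] ((\<lambda>i. [i,j]) ` {..<k})"

definition PP :: "nat \<Rightarrow> nat list set set" where
  "PP k = insert {[]} (Sp k ` {..<k})"

lemma mem_Sp: "v \<in> Sp k j \<longleftrightarrow> v = [j] \<or> (\<exists>i<k. v = [i,j])"
  unfolding Sp_def by auto

lemma Sp_sub: "j < k \<Longrightarrow> Sp k j \<subseteq> V k"
  unfolding Sp_def by auto

lemma PP_sub: "S \<in> PP k \<Longrightarrow> S \<subseteq> V k \<and> S \<noteq> {}"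
  unfolding PP_def using Sp_sub by (auto simp: Sp_def)

lemma PP_part: "partition_on (V k) (PP k)"
proof (rule partition_onI)
  show "\<Union> (PP k) = V k"
  proof
    show "\<Union> (PP k) \<subseteq> V k" using PP_sub by blast
    show "V k \<subseteq> \<Union> (PP k)"
    proof
      fix u assume "u \<in> V k"
      then show "u \<in> \<Union> (PP k)"
        by (cases rule: tv_cases) (auto simp: PP_def mem_Sp)
    qed
  qed
next
  fix p q assume "p \<in> PP k" "q \<in> PP k" "p \<noteq> q"
  then show "disjnt p q" unfolding PP_def disjnt_def by (auto simp: mem_Sp)
next
  show "{} \<notin> PP k" using PP_sub by blast
qed

lemma PP_card: "card (PP k) = k + 1"
proof -
  have inj: "inj_on (Sp k) {..<k}"
  proof (rule inj_onI)
    fix a b assume "a \<in> {..<k}" "b \<in> {..<k}" "Sp k a = Sp k b"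
    have "[a] \<in> Sp k a" by (simp add: mem_Sp)
    with \<open>Sp k a = Sp k b\<close> have "[a] \<in> Sp k b" by simp
    then show "a = b" by (simp add: mem_Sp)
  qed
  have "{[]} \<notin> Sp k ` {..<k}" by (auto simp: Sp_def)
  then show ?thesis unfolding PP_def using inj by (simp add: card_image)
qed

lemma leafsep:
  assumes "i \<noteq> j" "i' \<noteq> i" "i < k" "i' < k" "j < k"
  shows "sd k [i,j] (Sp k i) = 1 \<and> 2 \<le> sd k [i',j] (Sp k i)"
proof
  have "sd k [i,j] (Sp k i) = (if [i,j] \<in> Sp k i then 0 else 1)"
    by (rule sd_01[of _ _ _ "[i]"]) (use assms Sp_sub in \<open>auto simp: mem_Sp dist_def\<close>)
  then show "sd k [i,j] (Sp k i) = 1" using assms by (simp add: mem_Sp)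
  show "2 \<le> sd k [i',j] (Sp k i)"
    by (rule sd_ge2) (use assms Sp_sub in \<open>auto simp: mem_Sp dist_def Sp_def\<close>)
qed

lemma sep1:
  assumes k: "k \<ge> 2" and uv: "u \<in> V k" "v \<in> V k" "u \<noteq> v" "length u \<le> length v"
  shows "\<exists>S\<in>PP k. sd k u S \<noteq> sd k v S"
proof -
  have R: "{[]} \<in> PP k" by (simp add: PP_def)
  have SpP: "j < k \<Longrightarrow> Sp k j \<in> PP k" for j by (simp add: PP_def)
  have z: "sd k x S = 0 \<longleftrightarrow> x \<in> S" if "x \<in> V k" "S \<in> PP k" for x S
    using sd_0[OF that(1)] PP_sub[OF that(2)] by blast
  have mem: "S \<in> PP k \<Longrightarrow> x \<in> V k \<Longrightarrow> y \<in> V k \<Longrightarrow> x \<in> S \<Longrightarrow> y \<notin> S \<Longrightarrow> sd k x S \<noteq> sd k y S" for S x y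
    using z by metis
  show ?thesis
  proof (cases rule: tv_cases[OF uv(1)])
    case 1
    then show ?thesis using mem[OF R uv(1,2)] uv(3) R by (intro bexI[of _ "{[]}"]) auto
  next
    case (2 a)
    note ua = this
    show ?thesis
    proof (cases rule: tv_cases[OF uv(2)])
      case 1 with ua uv show ?thesis by simp
    next
      case (2 c)
      then show ?thesis using mem[OF SpP[OF \<open>a<k\<close>] uv(1,2)] SpP[OF \<open>a<k\<close>] ua uv(3) by (intro bexI[of _ "Sp k a"]) (auto simp: mem_Sp)
    next
      case (3 c d)
      show ?thesis
      proof (cases "d = a")
        case False
        then show ?thesis using mem[OF SpP[OF \<open>a<k\<close>] uv(1,2)] SpP[OF \<open>a<k\<close>] ua 3 by (intro bexI[of _ "Sp k a"]) (auto simp: mem_Sp)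
      next
        case True
        have "sd k u {[]} = (if u \<in> {[]} then 0 else 1)"
          by (rule sd_01[of _ _ _ "[]"]) (use ua in \<open>auto simp: dist_def\<close>)
        moreover have "2 \<le> sd k v {[]}"
          by (rule sd_ge2) (use 3 in \<open>auto simp: dist_def\<close>)
        ultimately show ?thesis using R ua by (intro bexI[of _ "{[]}"]) auto
      qed
    qed
  next
    case (3 a b)
    note ua = this
    show ?thesis
    proof (cases rule: tv_cases[OF uv(2)])
      case 1 with ua uv show ?thesis by simp
    next
      case (2 c) with ua uv show ?thesis by simp
    next
      case (3 c d)
      show ?thesis
      proof (cases "b = d")
        case False
        then show ?thesis using mem[OF SpP[OF \<open>b<k\<close>] uv(1,2)] SpP[OF \<open>b<k\<close>] ua 3 by (intro bexI[of _ "Sp k b"]) (auto simp: mem_Sp)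
      next
        case True
        with ua 3 uv(3) have "a \<noteq> c" by auto
        show ?thesis
        proof (cases "a = b")
          case False
          then show ?thesis using leafsep[of a b c k] SpP[of a] ua 3 \<open>a \<noteq> c\<close> True
            by (intro bexI[of _ "Sp k a"]) auto
        next
          case True
          then show ?thesis using leafsep[of c b a k] SpP[of c] ua 3 \<open>a \<noteq> c\<close> \<open>b = d\<close>
            by (intro bexI[of _ "Sp k c"]) auto
        qed
      qed
    qed
  qed
qed

lemma PP_loc: "k \<ge> 2 \<Longrightarrow> locating (V k) tree_E (PP k)"
  unfolding locating_def
proof (intro ballI impI)
  fix u v assume "k \<ge> 2" "u \<in> V k" "v \<in> V k" "u \<noteq> v"
  then show "\<exists>S\<in>PP k. sd k u S \<noteq> sd k v S"
  proof (cases "length u \<le> length v")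
    case True then show ?thesis using sep1 \<open>k\<ge>2\<close> \<open>u \<in> V k\<close> \<open>v \<in> V k\<close> \<open>u\<noteq>v\<close> by blast
  next
    case False
    then have "\<exists>S\<in>PP k. sd k v S \<noteq> sd k u S"
      using sep1 \<open>k\<ge>2\<close> \<open>u \<in> V k\<close> \<open>v \<in> V k\<close> \<open>u\<noteq>v\<close> by (metis nat_le_linear)
    then show ?thesis by metis
  qed
qed




lemma dist_twins:
  assumes "w \<in> V k" "w \<noteq> [i,j]" "w \<noteq> [i,j']"
  shows "dist [i,j] w = dist [i,j'] w"
  using assms by (cases rule: tv_cases[OF assms(1)]) (auto simp: dist_def)

lemma lower:
  assumes k: "k \<ge> 2" and P: "partition_on (V k) P" and L: "locating (V k) tree_E P"
  shows "k + 1 \<le> card P"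
proof (rule ccontr)
  assume "\<not> k + 1 \<le> card P"
  then have cP: "card P \<le> k" by simp
  have fP: "finite P" using finite_elements[OF tv_finite P] .
  have sub: "S \<subseteq> V k" "S \<noteq> {}" if "S \<in> P" for S
    using P that unfolding partition_on_def by auto
  have ex: "\<exists>S\<in>P. u \<in> S" if "u \<in> V k" for u
    using P that unfolding partition_on_def by auto
  have uniq: "S = T" if "S \<in> P" "T \<in> P" "u \<in> S" "u \<in> T" for S T u
    using P that unfolding partition_on_def disjoint_def disjnt_def by blast
  define pt where "pt u = (SOME S. S \<in> P \<and> u \<in> S)" for u
  have pt: "pt u \<in> P \<and> u \<in> pt u" if "u \<in> V k" for u
    unfolding pt_def using someI_ex[OF ex[OF that, unfolded Bex_def]] .
  have ptu: "S = pt u" if "u \<in> V k" "S \<in> P" "u \<in> S" for u S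
    using uniq pt that by blast
  have nosep: False if "x \<in> V k" "y \<in> V k" "x \<noteq> y" "\<forall>T\<in>P. sd k x T = sd k y T" for x y
    using L that unfolding locating_def by blast
  have sd0: "sd k x T = 0 \<longleftrightarrow> x \<in> T" if "x \<in> V k" "T \<in> P" for x T
    using sd_0[OF that(1) sub[OF that(2)]] .
  have same01: False if "x \<in> V k" "y \<in> V k" "x \<noteq> y"
      "\<forall>T\<in>P. sd k x T = (if x \<in> T then 0 else 1)"
      "\<forall>T\<in>P. sd k y T = (if y \<in> T then 0 else 1)"
      "\<forall>T\<in>P. x \<in> T \<longleftrightarrow> y \<in> T" for x y
    using nosep[OF that(1-3)] that(4-6) by auto
  have cover1: "\<exists>j<k. [i,j] \<in> S" if "i < k" "S \<in> P" for i S
  proof -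
    have inj: "inj_on (\<lambda>j. pt [i,j]) {..<k}"
    proof (rule inj_onI, rule ccontr)
      fix j j' assume jj: "j \<in> {..<k}" "j' \<in> {..<k}" "pt [i,j] = pt [i,j']" "j \<noteq> j'"
      have vj: "[i,j] \<in> V k" "[i,j'] \<in> V k" using jj \<open>i<k\<close> by auto
      have "sd k [i,j] T = sd k [i,j'] T" if T: "T \<in> P" for T
      proof (cases "T = pt [i,j]")
        case True
        then have "[i,j] \<in> T" "[i,j'] \<in> T" using pt[OF vj(1)] pt[OF vj(2)] jj(3) by auto
        then show ?thesis using sd0[OF vj(1) T] sd0[OF vj(2) T] by simp
      next
        case False
        then have n1: "[i,j] \<notin> T" "[i,j'] \<notin> T" using ptu[OF vj(1) T] ptu[OF vj(2) T] jj(3) by auto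
        have "dist [i,j] ` T = dist [i,j'] ` T"
        proof (rule image_cong)
          fix w assume "w \<in> T"
          then show "dist [i,j] w = dist [i,j'] w"
            using n1 sub(1)[OF T] by (intro dist_twins) auto
        qed simp
        then show ?thesis using sd_eq[OF vj(1) sub(1)[OF T]] sd_eq[OF vj(2) sub(1)[OF T]] by simp
      qed
      then show False using nosep[OF vj] jj(4) by blast
    qed
    have img: "(\<lambda>j. pt [i,j]) ` {..<k} \<subseteq> P" using pt \<open>i<k\<close> by auto
    have "card ((\<lambda>j. pt [i,j]) ` {..<k}) = k" using inj by (simp add: card_image)
    then have "(\<lambda>j. pt [i,j]) ` {..<k} = P" using card_subset_eq[OF fP img] cP card_mono[OF fP img] by simp
    then obtain j where "j < k" "S = pt [i,j]" using \<open>S \<in> P\<close> by auto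
    then show ?thesis using pt[of "[i,j]"] \<open>i<k\<close> by auto
  qed
  have mid01: "\<forall>T\<in>P. sd k [i] T = (if [i] \<in> T then 0 else 1)" if ik: "i < k" for i
  proof
    fix T assume T: "T \<in> P"
    obtain j where "j < k" "[i,j] \<in> T" using cover1[OF ik T] by blast
    then show "sd k [i] T = (if [i] \<in> T then 0 else 1)"
      using sd_01[OF _ sub(1)[OF T], of "[i]" "[i,j]"] ik by (simp add: dist_def)
  qed
  have cover2: "\<exists>i<k. [i] \<in> S" if "S \<in> P" for S
  proof -
    have inj: "inj_on (\<lambda>i. pt [i]) {..<k}"
    proof (rule inj_onI, rule ccontr)
      fix i i' assume ii: "i \<in> {..<k}" "i' \<in> {..<k}" "pt [i] = pt [i']" "i \<noteq> i'"
      have vi: "[i] \<in> V k" "[i'] \<in> V k" using ii by auto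
      have "\<forall>T\<in>P. [i] \<in> T \<longleftrightarrow> [i'] \<in> T"
      proof (intro ballI iffI)
        fix T assume T: "T \<in> P"
        show "[i'] \<in> T" if "[i] \<in> T"
          using ptu[OF vi(1) T that] pt[OF vi(2)] ii(3) by simp
        show "[i] \<in> T" if "[i'] \<in> T"
          using ptu[OF vi(2) T that] pt[OF vi(1)] ii(3) by simp
      qed
      then show False using same01[OF vi] mid01 ii by auto
    qed
    have img: "(\<lambda>i. pt [i]) ` {..<k} \<subseteq> P" using pt by auto
    have "card ((\<lambda>i. pt [i]) ` {..<k}) = k" using inj by (simp add: card_image)
    then have "(\<lambda>i. pt [i]) ` {..<k} = P" using card_subset_eq[OF fP img] cP card_mono[OF fP img] by simp
    then obtain i where "i < k" "S = pt [i]" using \<open>S \<in> P\<close> by auto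
    then show ?thesis using pt[of "[i]"] by auto
  qed
  have root01: "\<forall>T\<in>P. sd k [] T = (if [] \<in> T then 0 else 1)"
  proof
    fix T assume T: "T \<in> P"
    obtain i where "i < k" "[i] \<in> T" using cover2[OF T] by blast
    then show "sd k [] T = (if [] \<in> T then 0 else 1)"
      using sd_01[OF _ sub(1)[OF T], of "[]" "[i]"] by (simp add: dist_def)
  qed
  obtain i0 where i0: "i0 < k" "[i0] \<in> pt []" using cover2 pt[of "[]"] by auto
  have vi0: "[i0] \<in> V k" using i0 by simp
  have vr: "[] \<in> V k" by simp
  have "\<forall>T\<in>P. [] \<in> T \<longleftrightarrow> [i0] \<in> T"
  proof (intro ballI iffI)
    fix T assume T: "T \<in> P"
    show "[i0] \<in> T" if "[] \<in> T"
      using ptu[OF vr T that] i0 by simp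
    show "[] \<in> T" if "[i0] \<in> T"
      using ptu[OF vi0 T that] ptu[OF vi0 conjunct1[OF pt[OF vr]] i0(2)] pt[OF vr] by simp
  qed
  then show False using same01[of "[]" "[i0]"] vi0 root01 mid01[OF i0(1)] by auto
qed

theorem proposition6:
  fixes k :: nat
  assumes "k \<ge> 2"
  shows "twin_number (tree_V k) tree_E = k \<and> partition_dim (tree_V k) tree_E = k + 1"
proof
  show "twin_number (tree_V k) tree_E = k" using twin_num[OF assms] .
  show "partition_dim (tree_V k) tree_E = k + 1"
    unfolding partition_dim_def
  proof (rule Least_equality)
    show "\<exists>P. partition_on (tree_V k) P \<and> locating (tree_V k) tree_E P \<and> card P = k + 1"
      using PP_part PP_loc[OF assms] PP_card by blast
  next
    fix m assume "\<exists>P. partition_on (tree_V k) P \<and> locating (tree_V k) tree_E P \<and> card P = m"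
    then show "k + 1 \<le> m" using lower[OF assms] by blast
  qed
qed


end
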